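(* Let $m \ge 1$ be an integer and let $c : [-1,1] \to \mathbb{R}$ be continuous with $c^{-1}(1) = \{-1, 0, 1\}$ and such that $\theta \mapsto \theta\, c(\theta)$ is strictly increasing on $[-1,1]$. Let $[a,b]$ be an angular interval with $0 < b - a < 2\pi$, split into $m$ equal consecutive subintervals $[a_{i-1}, a_i]$, $i = 1,\dots,m$ ($a_0 = a$, $a_m = b$), and let $\varphi_i : [a_{i-1}, a_i] \to [-1,1]$ be the increasing affine bijection. Define $F : \mathbb{R}^2 \to \mathbb{R}^2$ by $F(o) = o$ and, in the polar coordinates described below, $$F(\theta, r) = \big(\varphi_i^{-1}(\varphi_i(\theta)\, c(\varphi_i(\theta))),\; r + 1 - 2\varphi_i(\theta)^2\big) \quad\text{if } \theta \in [a_{i-1}, a_i],$$ and $F(\theta, r) = (\theta, r - 1)$ if $\theta \notin [a,b]$. Then $o$ is an isolated fixed point of every iterate $F^n$, and: (1) if $c([-1,1]) \subset [1/2, 1]$, then $i(F^n, o) = 1 - m$ for every $n \ge 1$; (2) if $c([-1,1]) \subset [1, 2]$, then $i(F^n, o) = 1 + m$ for every $n \ge 1$. In particular (case $m=1$) the corresponding maps have indices $i(F^n,o)=0$ for all $n$ in case (1) and $i(F^n,o)=2$ for all $n$ in case (2).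
   Context: Polar coordinates on $\mathbb{R}^2\setminus\{o\}$ ($o$ the origin): a point is written $(\theta, r)$ with $\theta \in (-\pi,\pi]$ an angle and $r \in \mathbb{R}$, corresponding to $e^{r}(\cos\theta, \sin\theta)$; thus the origin corresponds to $r = -\infty$. $i(g,o)$ denotes the fixed point index of $g$ at the isolated fixed point $o$ (degree of $x \mapsto (x-g(x))/\|x-g(x)\|$ on a small circle around $o$). *)

theory Defs
  imports "HOL-Analysis.Analysis"
begin

text \<open>The plane R^2 is modelled as the complex numbers; the origin o is 0.
  The point with polar coordinates (theta, r) is exp r * cis theta.\<close>

definition polar :: "real \<Rightarrow> real \<Rightarrow> complex" where
  "polar \<theta> r = complex_of_real (exp r) * cis \<theta>"

definition sub_pt :: "real \<Rightarrow> real \<Rightarrow> nat \<Rightarrow> nat \<Rightarrow> real" where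
  "sub_pt a b m i = a + real i * (b - a) / real m"

definition phi :: "real \<Rightarrow> real \<Rightarrow> nat \<Rightarrow> nat \<Rightarrow> real \<Rightarrow> real" where
  "phi a b m i t = 2 * (t - sub_pt a b m (i - 1)) / (sub_pt a b m i - sub_pt a b m (i - 1)) - 1"

definition phi_inv :: "real \<Rightarrow> real \<Rightarrow> nat \<Rightarrow> nat \<Rightarrow> real \<Rightarrow> real" where
  "phi_inv a b m i s = sub_pt a b m (i - 1) + (s + 1) * (sub_pt a b m i - sub_pt a b m (i - 1)) / 2"

text \<open>A nonzero point z lies in the angular interval [a,b] iff some representative
  Arg z + 2 pi k of its angle lies in [a,b] (unique since b - a < 2 pi).\<close>
definition ang_rep :: "real \<Rightarrow> real \<Rightarrow> complex \<Rightarrow> real" where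
  "ang_rep a b z = (THE t. t \<in> {a..b} \<and> (\<exists>k::int. t = Arg z + 2 * pi * of_int k))"

definition Fmap :: "nat \<Rightarrow> (real \<Rightarrow> real) \<Rightarrow> real \<Rightarrow> real \<Rightarrow> complex \<Rightarrow> complex" where
  "Fmap m c a b z =
    (if z = 0 then 0
     else if (\<exists>t\<in>{a..b}. \<exists>k::int. t = Arg z + 2 * pi * of_int k) then
       (let t = ang_rep a b z;
            i = (SOME i. i \<in> {1..m} \<and> t \<in> {sub_pt a b m (i - 1) .. sub_pt a b m i});
            s = phi a b m i t
        in polar (phi_inv a b m i (s * c s)) (ln (cmod z) + 1 - 2 * s\<^sup>2))
     else polar (Arg z) (ln (cmod z) - 1))"

definition isolated_fixpoint :: "(complex \<Rightarrow> complex) \<Rightarrow> complex \<Rightarrow> bool" where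
  "isolated_fixpoint g p \<longleftrightarrow> g p = p \<and>
     (\<exists>\<epsilon>>0. \<forall>x. 0 < dist x p \<and> dist x p < \<epsilon> \<longrightarrow> g x \<noteq> x)"

text \<open>Fixed point index: degree of x |-> (x - g x)/|x - g x| on small circles
  around p (counterclockwise), computed via a continuous lift of the angle.\<close>
definition fp_index :: "(complex \<Rightarrow> complex) \<Rightarrow> complex \<Rightarrow> int" where
  "fp_index g p = (THE d::int. \<exists>\<epsilon>>0. \<forall>\<rho>. 0 < \<rho> \<and> \<rho> < \<epsilon> \<longrightarrow>
      (\<exists>L. continuous_on {0..2*pi} L \<and>
           (\<forall>t\<in>{0..2*pi}. sgn (p + \<rho> * cis t - g (p + \<rho> * cis t)) = cis (L t)) \<and>
           L (2*pi) - L 0 = 2 * pi * of_int d))"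

end

theory Submission
  imports Defs
begin



lemma cis_eq_1_int: "cis x = 1 \<Longrightarrow> \<exists>k::int. x = 2 * pi * of_int k"
proof -
  assume "cis x = 1"
  then have "exp (\<i> * complex_of_real x) = 1" by (simp add: cis_conv_exp)
  then obtain n::int where "Im (\<i> * complex_of_real x) = of_int (2*n) * pi"
    by (auto simp: exp_eq_1)
  then have "x = 2 * pi * of_int n" by simp
  then show ?thesis by blast
qed

lemma cis_eq_int: "cis x = cis y \<Longrightarrow> \<exists>k::int. x = y + 2 * pi * of_int k"
proof -
  assume "cis x = cis y"
  then have "cis (x - y) = 1" by (simp add: cis_divide[symmetric])
  then obtain k::int where "x - y = 2 * pi * of_int k" using cis_eq_1_int by blast
  then show ?thesis by (intro exI[of _ k]) simp
qed

lemma cis_periodic: "cis (x + 2 * pi * of_int k) = cis x"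
proof -
  have "cis (x + 2 * pi * of_int k) = cis x * cis (2 * pi * of_int k)" by (simp only: cis_mult)
  also have "cis (2 * pi * of_int k) = 1" by (rule cis_multiple_2pi) simp
  finally show ?thesis by simp
qed

lemma sgn_exp_cis: "sgn (exp z) = cis (Im z)"
proof -
  have "exp z = complex_of_real (exp (Re z)) * cis (Im z)" by (simp add: exp_eq_polar)
  then have "sgn (exp z) = sgn (complex_of_real (exp (Re z))) * sgn (cis (Im z))"
    by (simp add: sgn_mult)
  also have "sgn (complex_of_real (exp (Re z))) = 1" by (simp add: sgn_of_real)
  also have "sgn (cis (Im z)) = cis (Im z)" by (simp add: sgn_div_norm)
  finally show ?thesis by simp
qed

lemma lift_exists:
  fixes u v :: real
  assumes "continuous_on {u..v} f" "\<And>t. t \<in> {u..v} \<Longrightarrow> f t \<noteq> 0"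
  shows "\<exists>L. continuous_on {u..v} L \<and> (\<forall>t\<in>{u..v}. sgn (f t) = cis (L t))"
proof -
  have "contractible {u..v::real}" by (intro convex_imp_contractible) (simp add: convex_real_interval)
  then obtain g where g: "continuous_on {u..v} g" "\<And>x. x \<in> {u..v} \<Longrightarrow> f x = exp (g x)"
    using continuous_logarithm_on_contractible[OF assms(1)] assms(2) by metis
  show ?thesis
  proof (intro exI conjI ballI)
    show "continuous_on {u..v} (\<lambda>t. Im (g t))" by (intro continuous_intros g)
    fix t assume "t \<in> {u..v}"
    then show "sgn (f t) = cis (Im (g t))" using g(2) sgn_exp_cis by simp
  qed
qed

lemma cis_const:
  fixes u v :: real
  assumes "continuous_on {u..v} g" "u \<le> v" "\<And>t. t \<in> {u..v} \<Longrightarrow> cis (g t) = 1"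
  shows "g v = g u"
proof -
  have "g constant_on {u..v}"
  proof (rule continuous_discrete_range_constant)
    show "connected {u..v}" by simp
    show "continuous_on {u..v} g" by fact
    fix x assume x: "x \<in> {u..v}"
    obtain kx::int where kx: "g x = 2 * pi * kx" using cis_eq_1_int assms(3)[OF x] by blast
    show "\<exists>e>0. \<forall>y. y \<in> {u..v} \<and> g y \<noteq> g x \<longrightarrow> e \<le> norm (g y - g x)"
    proof (intro exI[of _ "2*pi"] conjI allI impI)
      fix y assume y: "y \<in> {u..v} \<and> g y \<noteq> g x"
      obtain ky::int where ky: "g y = 2 * pi * ky" using cis_eq_1_int assms(3) y by blast
      have "ky \<noteq> kx" using y kx ky by auto
      then have "1 \<le> \<bar>real_of_int ky - real_of_int kx\<bar>" by linarith
      then have "2 * pi * 1 \<le> 2 * pi * \<bar>real_of_int ky - real_of_int kx\<bar>"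
        by (intro mult_left_mono) auto
      also have "\<dots> = norm (g y - g x)"
      proof -
        have "g y - g x = 2 * pi * (real_of_int ky - real_of_int kx)" using kx ky by (simp add: right_diff_distrib)
        then show ?thesis by (simp add: abs_mult)
      qed
      finally show "2 * pi \<le> norm (g y - g x)" by simp
    qed simp
  qed
  then show ?thesis using assms(2) unfolding constant_on_def by force
qed

lemma lift_incr_unique:
  fixes u v :: real
  assumes "continuous_on {u..v} L1" "continuous_on {u..v} L2" "u \<le> v"
    "\<And>t. t \<in> {u..v} \<Longrightarrow> cis (L1 t) = cis (L2 t)"
  shows "L1 v - L1 u = L2 v - L2 u"
proof -
  have "(\<lambda>t. L1 t - L2 t) v = (\<lambda>t. L1 t - L2 t) u"
  proof (rule cis_const[where g="\<lambda>t. L1 t - L2 t"])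
    show "continuous_on {u..v} (\<lambda>t. L1 t - L2 t)" by (intro continuous_intros assms)
    fix t assume "t \<in> {u..v}"
    then show "cis (L1 t - L2 t) = 1" using assms(4) by (simp add: cis_divide[symmetric])
  qed fact
  then show ?thesis by simp
qed

lemma ray_lemma:
  fixes u v :: real
  assumes f: "continuous_on {u..v} f" and uv: "u \<le> v"
    and L: "continuous_on {u..v} L" "\<And>t. t \<in> {u..v} \<Longrightarrow> sgn (f t) = cis (L t)"
    and ray: "\<And>t. t \<in> {u..v} \<Longrightarrow> f t * cis \<gamma> \<notin> \<real>\<^sub>\<le>\<^sub>0"
  shows "L v - L u = Arg (f v * cis \<gamma>) - Arg (f u * cis \<gamma>)"
proof -
  define N where "N t = Arg (f t * cis \<gamma>) - \<gamma>" for t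
  have "L v - L u = N v - N u"
  proof (rule lift_incr_unique[OF L(1) _ uv])
    show "continuous_on {u..v} N" unfolding N_def
      by (intro continuous_intros f) (use ray in auto)
    fix t assume t: "t \<in> {u..v}"
    have nz: "f t \<noteq> 0" using ray[OF t] by auto
    have "cis (N t) = cis (Arg (f t * cis \<gamma>)) / cis \<gamma>" unfolding N_def by (simp add: cis_divide)
    also have "\<dots> = sgn (f t * cis \<gamma>) / cis \<gamma>" using nz by (simp add: cis_Arg)
    also have "\<dots> = sgn (f t)"
    proof -
      have "sgn (cis \<gamma>) = cis \<gamma>" by (simp add: sgn_div_norm)
      then show ?thesis by (simp add: sgn_mult)
    qed
    finally show "cis (L t) = cis (N t)" using L(2)[OF t] by simp
  qed
  then show ?thesis unfolding N_def by simp
qed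

lemma fp_index_eqI:
  assumes "\<And>r. r > 0 \<Longrightarrow> \<exists>L. continuous_on {0..2*pi} L \<and>
     (\<forall>t\<in>{0..2*pi}. sgn (complex_of_real r * cis t - g (complex_of_real r * cis t)) = cis (L t)) \<and>
     L (2*pi) - L 0 = 2 * pi * of_int d"
  shows "fp_index g 0 = d"
  unfolding fp_index_def
proof (rule the_equality)
  show "\<exists>\<epsilon>>0. \<forall>\<rho>. 0 < \<rho> \<and> \<rho> < \<epsilon> \<longrightarrow>
      (\<exists>L. continuous_on {0..2*pi} L \<and>
           (\<forall>t\<in>{0..2*pi}. sgn (0 + \<rho> * cis t - g (0 + \<rho> * cis t)) = cis (L t)) \<and>
           L (2*pi) - L 0 = 2 * pi * of_int d)"
  proof (intro exI[of _ 1] conjI allI impI)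
    fix \<rho> :: complex assume "0 < \<rho> \<and> \<rho> < 1"
    then have r: "Re \<rho> > 0" "\<rho> = complex_of_real (Re \<rho>)"
      by (auto simp: less_complex_def complex_eq_iff)
    show "\<exists>L. continuous_on {0..2*pi} L \<and>
           (\<forall>t\<in>{0..2*pi}. sgn (0 + \<rho> * cis t - g (0 + \<rho> * cis t)) = cis (L t)) \<and>
           L (2*pi) - L 0 = 2 * pi * of_int d"
      using assms[OF r(1)] r(2) by (metis add_0)
  qed (simp add: less_complex_def)
next
  fix d' assume "\<exists>\<epsilon>>0. \<forall>\<rho>. 0 < \<rho> \<and> \<rho> < \<epsilon> \<longrightarrow>
      (\<exists>L. continuous_on {0..2*pi} L \<and>
           (\<forall>t\<in>{0..2*pi}. sgn (0 + \<rho> * cis t - g (0 + \<rho> * cis t)) = cis (L t)) \<and>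
           L (2*pi) - L 0 = 2 * pi * of_int d')"
  then obtain \<epsilon> :: complex where e: "\<epsilon> > 0" and
    H: "\<And>\<rho>. 0 < \<rho> \<and> \<rho> < \<epsilon> \<Longrightarrow>
      (\<exists>L. continuous_on {0..2*pi} L \<and>
           (\<forall>t\<in>{0..2*pi}. sgn (0 + \<rho> * cis t - g (0 + \<rho> * cis t)) = cis (L t)) \<and>
           L (2*pi) - L 0 = 2 * pi * of_int d')" by blast
  define r where "r = Re \<epsilon> / 2"
  have r: "r > 0" "0 < complex_of_real r \<and> complex_of_real r < \<epsilon>"
    using e by (auto simp: r_def less_complex_def)
  obtain L1 where L1: "continuous_on {0..2*pi} L1"
    "\<forall>t\<in>{0..2*pi}. sgn (complex_of_real r * cis t - g (complex_of_real r * cis t)) = cis (L1 t)"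
    "L1 (2*pi) - L1 0 = 2 * pi * of_int d'" using H[OF r(2)] by auto
  obtain L2 where L2: "continuous_on {0..2*pi} L2"
    "\<forall>t\<in>{0..2*pi}. sgn (complex_of_real r * cis t - g (complex_of_real r * cis t)) = cis (L2 t)"
    "L2 (2*pi) - L2 0 = 2 * pi * of_int d" using assms[OF r(1)] by auto
  have "L1 (2*pi) - L1 0 = L2 (2*pi) - L2 0"
    by (rule lift_incr_unique[OF L1(1) L2(1)]) (use L1(2) L2(2) in auto)
  then have "2 * pi * of_int d' = 2 * pi * (of_int d :: real)" using L1(3) L2(3) by simp
  then show "d' = d" by simp
qed




definition hh :: "(real \<Rightarrow> real) \<Rightarrow> real \<Rightarrow> real" where "hh c s = s * c s"
definition idx :: "real \<Rightarrow> real \<Rightarrow> nat \<Rightarrow> real \<Rightarrow> nat" where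
  "idx a b m t = (SOME i. i \<in> {1..m} \<and> t \<in> {sub_pt a b m (i - 1) .. sub_pt a b m i})"
definition GG :: "nat \<Rightarrow> (real \<Rightarrow> real) \<Rightarrow> real \<Rightarrow> real \<Rightarrow> real \<Rightarrow> real" where
  "GG m c a b t = (if t \<in> {a..b} then phi_inv a b m (idx a b m t) (hh c (phi a b m (idx a b m t) t)) else t)"
definition DD :: "nat \<Rightarrow> (real \<Rightarrow> real) \<Rightarrow> real \<Rightarrow> real \<Rightarrow> real \<Rightarrow> real" where
  "DD m c a b t = (if t \<in> {a..b} then 1 - 2 * (phi a b m (idx a b m t) t)\<^sup>2 else -1)"

locale fsetup =
  fixes m :: nat and c :: "real \<Rightarrow> real" and a b :: real
  assumes m1: "m \<ge> 1"
    and cc: "continuous_on {-1..1} c"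
    and c1: "{s \<in> {-1..1}. c s = 1} = {-1, 0, 1}"
    and hm: "strict_mono_on {-1..1} (\<lambda>s. s * c s)"
    and ab1: "0 < b - a" and ab2: "b - a < 2 * pi"
begin

abbreviation "A i \<equiv> sub_pt a b m i"
abbreviation "h \<equiv> hh c"
abbreviation "G \<equiv> GG m c a b"
abbreviation "D \<equiv> DD m c a b"
abbreviation "F \<equiv> Fmap m c a b"
abbreviation "ph i \<equiv> phi a b m i"
abbreviation "phinv i \<equiv> phi_inv a b m i"

definition len where "len = (b - a) / real m"

lemma m_pos: "real m \<ge> 1" using m1 by simp

lemma nz: "b - a \<noteq> 0" "real m \<noteq> 0" "a \<noteq> b" "b \<noteq> a" "m \<noteq> 0" using ab1 m1 by auto

lemma len_pos: "len > 0" using ab1 m1 by (simp add: len_def)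

lemma len_le: "len \<le> b - a"
proof -
  have "(b - a) / real m \<le> (b - a) / 1" using m_pos ab1 by (intro divide_left_mono) auto
  then show ?thesis by (simp add: len_def)
qed

lemma len_lt: "len < 2 * pi" using len_le ab2 by linarith

lemma A_eq: "A i = a + real i * len" unfolding sub_pt_def len_def by simp

lemma A0: "A 0 = a" by (simp add: A_eq)

lemma Am: "A m = b" using m1 by (simp add: A_eq len_def)

lemma A_mono: "i \<le> j \<Longrightarrow> A i \<le> A j"
  using len_pos unfolding A_eq by (intro add_left_mono mult_right_mono) auto

lemma A_step: "i \<ge> 1 \<Longrightarrow> A i - A (i - 1) = len"
  by (simp add: A_eq of_nat_diff algebra_simps)

lemma A_in: "i \<in> {1..m} \<Longrightarrow> a \<le> A (i - 1) \<and> A i \<le> b"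
  using A_mono[of 0 "i - 1"] A_mono[of i m] by (auto simp: A0 Am)

lemma phi_eq: "i \<ge> 1 \<Longrightarrow> ph i t = 2 * (t - A (i - 1)) / len - 1"
  unfolding phi_def using A_step by simp

lemma phinv_eq: "i \<ge> 1 \<Longrightarrow> phinv i s = A (i - 1) + (s + 1) * len / 2"
  unfolding phi_inv_def using A_step by simp

lemma phinv_phi: "i \<ge> 1 \<Longrightarrow> phinv i (ph i t) = t"
  using len_pos by (simp add: phi_eq phinv_eq field_simps nz)

lemma phi_phinv: "i \<ge> 1 \<Longrightarrow> ph i (phinv i s) = s"
  using len_pos by (simp add: phi_eq phinv_eq field_simps nz)

lemma phi_range: "i \<ge> 1 \<Longrightarrow> t \<in> {A (i - 1)..A i} \<Longrightarrow> ph i t \<in> {-1..1}"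
proof -
  assume i: "i \<ge> 1" and t: "t \<in> {A (i - 1)..A i}"
  have "0 \<le> (t - A (i - 1)) / len" "(t - A (i - 1)) / len \<le> 1"
    using t len_pos A_step[OF i] by (auto simp: divide_le_eq_1)
  moreover have "ph i t = 2 * ((t - A (i - 1)) / len) - 1" by (simp add: phi_eq[OF i])
  ultimately show ?thesis unfolding atLeastAtMost_iff by linarith
qed

lemma phinv_range: "i \<ge> 1 \<Longrightarrow> s \<in> {-1..1} \<Longrightarrow> phinv i s \<in> {A (i - 1)..A i}"
proof -
  assume i: "i \<ge> 1" and s: "s \<in> {-1..1}"
  have "0 \<le> (s + 1) * len" using s len_pos by (intro mult_nonneg_nonneg) auto
  moreover have "(s + 1) * len \<le> 2 * len" using s len_pos by (intro mult_right_mono) auto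
  ultimately have "0 \<le> (s + 1) * len / 2" "(s + 1) * len / 2 \<le> len" by auto
  then show ?thesis using A_step[OF i] by (auto simp: phinv_eq[OF i])
qed

lemma phi_left: "i \<ge> 1 \<Longrightarrow> ph i (A (i - 1)) = -1" by (simp add: phi_eq)
lemma phi_right: "i \<ge> 1 \<Longrightarrow> ph i (A i) = 1"
  using A_step[of i] len_pos by (simp add: phi_eq nz)
lemma phinv_mid: "i \<ge> 1 \<Longrightarrow> phinv i 0 = A (i - 1) + len / 2" by (simp add: phinv_eq)

lemma c_vals: "c (-1) = 1" "c 0 = 1" "c 1 = 1"
  using c1 by (auto simp: set_eq_iff)

lemma c_fix: "s \<in> {-1..1} \<Longrightarrow> c s = 1 \<Longrightarrow> s \<in> {-1, 0, 1}"
  using c1 by (auto simp: set_eq_iff)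

lemma h_vals: "h (-1) = -1" "h 0 = 0" "h 1 = 1"
  by (simp_all add: hh_def c_vals)

lemma h_mono: "s \<in> {-1..1} \<Longrightarrow> t \<in> {-1..1} \<Longrightarrow> s \<le> t \<Longrightarrow> h s \<le> h t"
  using strict_mono_on_imp_mono_on[OF hm] unfolding hh_def mono_on_def by blast

lemma h_range: "s \<in> {-1..1} \<Longrightarrow> h s \<in> {-1..1}"
  using h_mono[of "-1" s] h_mono[of s 1] h_vals by auto

lemma hpow_range: "s \<in> {-1..1} \<Longrightarrow> (h ^^ n) s \<in> {-1..1}"
proof (induction n)
  case (Suc n) then show ?case using h_range[of "(h ^^ n) s"] by simp
qed simp

lemma hpow_fix: "h s = s \<Longrightarrow> (h ^^ n) s = s"
  by (induction n) auto

lemma h_fix: "s \<in> {-1..1} \<Longrightarrow> h s = s \<Longrightarrow> s \<in> {-1, 0, 1}"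
proof -
  assume s: "s \<in> {-1..1}" and hs: "h s = s"
  then have "s * (c s - 1) = 0" by (simp add: hh_def algebra_simps)
  then have "s = 0 \<or> c s = 1" by simp
  then show ?thesis using c_fix[OF s] by auto
qed

lemma h_periodic:
  assumes s: "s \<in> {-1..1}" and n: "n \<ge> 1" and p: "(h ^^ n) s = s"
  shows "h s = s"
proof (rule ccontr)
  assume ne: "h s \<noteq> s"
  show False
  proof (cases "h s > s")
    case True
    have "\<And>j. j \<ge> 1 \<Longrightarrow> (h ^^ j) s \<ge> h s"
    proof -
      fix j :: nat assume "j \<ge> 1"
      then show "(h ^^ j) s \<ge> h s"
      proof (induction j rule: dec_induct)
        case base then show ?case by simp
      next
        case (step j)
        have "h s \<le> h ((h ^^ j) s)"
          using step True by (intro h_mono s hpow_range) auto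
        then show ?case by simp
      qed
    qed
    then show False using n p True by fastforce
  next
    case False
    then have lt: "h s < s" using ne by simp
    have "\<And>j. j \<ge> 1 \<Longrightarrow> (h ^^ j) s \<le> h s"
    proof -
      fix j :: nat assume "j \<ge> 1"
      then show "(h ^^ j) s \<le> h s"
      proof (induction j rule: dec_induct)
        case base then show ?case by simp
      next
        case (step j)
        have "h ((h ^^ j) s) \<le> h s"
          using step lt by (intro h_mono s hpow_range) auto
        then show ?case by simp
      qed
    qed
    then show False using n p lt by fastforce
  qed
qed

lemma cover: "t \<in> {a..b} \<Longrightarrow> \<exists>i\<in>{1..m}. t \<in> {A (i - 1)..A i}"
proof -
  assume t: "t \<in> {a..b}"
  define q where "q = (t - a) / len"
  have bb: "b = a + real m * len" using Am A_eq[of m] by simp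
  have q: "0 \<le> q" "q \<le> real m" using t len_pos m1 bb by (auto simp: q_def field_simps)
  show ?thesis
  proof (cases "q = 0")
    case True
    then have "t = a" using len_pos by (simp add: q_def nz)
    then show ?thesis using m1 A_mono[of 0 1] by (intro bexI[of _ 1]) (auto simp: A0)
  next
    case False
    define k where "k = nat \<lceil>q\<rceil>"
    have k: "real k = of_int \<lceil>q\<rceil>" using q by (simp add: k_def)
    have cq: "\<lceil>q\<rceil> \<ge> 1" using q False by simp
    have k1: "k \<ge> 1" using cq unfolding k_def by linarith
    have k2: "k \<le> m" using q(2) by (simp add: k_def nat_le_iff ceiling_le_iff)
    have "real k - 1 < q" "q \<le> real k" using k by linarith+
    then have "real (k - 1) \<le> q" using k1 by (simp add: of_nat_diff)
    then have "A (k - 1) \<le> t" "t \<le> A k" using \<open>q \<le> real k\<close> len_pos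
      by (auto simp: A_eq q_def field_simps)
    then show ?thesis using k1 k2 by (intro bexI[of _ k]) auto
  qed
qed

end


context fsetup begin

lemma idx_spec: "t \<in> {a..b} \<Longrightarrow> idx a b m t \<in> {1..m} \<and> t \<in> {A (idx a b m t - 1)..A (idx a b m t)}"
  unfolding idx_def by (rule someI_ex) (use cover in blast)

lemma agree_lt:
  assumes "i \<in> {1..m}" "j \<in> {1..m}" "i < j" "t \<in> {A (i - 1)..A i}" "t \<in> {A (j - 1)..A j}"
  shows "phinv i (h (ph i t)) = phinv j (h (ph j t)) \<and> (ph i t)^2 = (ph j t)^2"
proof -
  have "A i \<le> A (j - 1)" using assms(3) by (intro A_mono) auto
  then have t1: "t = A i" and t2: "t = A (j - 1)" using assms by auto
  have i1: "i \<ge> 1" and j1: "j \<ge> 1" using assms by auto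
  have "ph i t = 1" using t1 phi_right[OF i1] by simp
  moreover have "ph j t = -1" using t2 phi_left[OF j1] by simp
  moreover have "phinv i 1 = A i" using phinv_phi[OF i1, of "A i"] phi_right[OF i1] by simp
  moreover have "phinv j (-1) = A (j - 1)" using phinv_phi[OF j1, of "A (j - 1)"] phi_left[OF j1] by simp
  ultimately show ?thesis using t1 t2 h_vals by simp
qed

lemma agree:
  assumes "i \<in> {1..m}" "j \<in> {1..m}" "t \<in> {A (i - 1)..A i}" "t \<in> {A (j - 1)..A j}"
  shows "phinv i (h (ph i t)) = phinv j (h (ph j t)) \<and> (ph i t)^2 = (ph j t)^2"
proof (cases i j rule: linorder_cases)
  case less then show ?thesis using agree_lt[OF assms(1,2) less assms(3,4)] by simp
next
  case greater then show ?thesis using agree_lt[OF assms(2,1) greater assms(4,3)] by simp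
qed simp

lemma sub_ab: "i \<in> {1..m} \<Longrightarrow> t \<in> {A (i - 1)..A i} \<Longrightarrow> t \<in> {a..b}"
  using A_in[of i] by auto

lemma G_sub:
  assumes i: "i \<in> {1..m}" and t: "t \<in> {A (i - 1)..A i}"
  shows "G t = phinv i (h (ph i t)) \<and> D t = 1 - 2 * (ph i t)^2"
proof -
  have tab: "t \<in> {a..b}" using sub_ab[OF i t] .
  note sp = idx_spec[OF tab]
  have "phinv (idx a b m t) (h (ph (idx a b m t) t)) = phinv i (h (ph i t)) \<and>
        (ph (idx a b m t) t)^2 = (ph i t)^2"
    using agree[OF conjunct1[OF sp] i conjunct2[OF sp] t] .
  then show ?thesis using tab unfolding GG_def DD_def by simp
qed

lemma G_left: "i \<in> {1..m} \<Longrightarrow> G (A (i - 1)) = A (i - 1) \<and> D (A (i - 1)) = -1"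
proof -
  assume i: "i \<in> {1..m}"
  then have i1: "i \<ge> 1" by simp
  have "A (i - 1) \<in> {A (i - 1)..A i}" using A_mono[of "i - 1" i] by simp
  note g = G_sub[OF i this]
  have "phinv i (-1) = A (i - 1)" using phinv_phi[OF i1, of "A (i - 1)"] phi_left[OF i1] by simp
  then show ?thesis using g phi_left[OF i1] h_vals by simp
qed

lemma G_right: "i \<in> {1..m} \<Longrightarrow> G (A i) = A i \<and> D (A i) = -1"
proof -
  assume i: "i \<in> {1..m}"
  then have i1: "i \<ge> 1" by simp
  have "A i \<in> {A (i - 1)..A i}" using A_mono[of "i - 1" i] by simp
  note g = G_sub[OF i this]
  have "phinv i 1 = A i" using phinv_phi[OF i1, of "A i"] phi_right[OF i1] by simp
  then show ?thesis using g phi_right[OF i1] h_vals by simp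
qed

lemma G_a: "G a = a \<and> D a = -1" using G_left[of 1] m1 A0 by simp
lemma G_b: "G b = b \<and> D b = -1" using G_right[of m] m1 Am by simp

lemma G_out: "t \<in> {b..a + 2*pi} \<Longrightarrow> G t = t \<and> D t = -1"
proof -
  assume t: "t \<in> {b..a + 2*pi}"
  show ?thesis
  proof (cases "t = b")
    case True then show ?thesis using G_b by simp
  next
    case False then have "t \<notin> {a..b}" using t by auto
    then show ?thesis unfolding GG_def DD_def by auto
  qed
qed

lemma b_le: "b \<le> a + 2 * pi" using ab2 by simp

lemma G_sub_range: "i \<in> {1..m} \<Longrightarrow> t \<in> {A (i - 1)..A i} \<Longrightarrow> G t \<in> {A (i - 1)..A i}"
  using G_sub phinv_range phi_range h_range by simp

lemma G_maps: "t \<in> {a..a + 2*pi} \<Longrightarrow> G t \<in> {a..a + 2*pi}"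
proof -
  assume t: "t \<in> {a..a + 2*pi}"
  show ?thesis
  proof (cases "t \<le> b")
    case True
    then have "t \<in> {a..b}" using t by simp
    then obtain i where i: "i \<in> {1..m}" "t \<in> {A (i - 1)..A i}" using cover by blast
    then show ?thesis using G_sub_range[OF i] A_in[OF i(1)] b_le by auto
  next
    case False then show ?thesis using G_out t by simp
  qed
qed

lemma Gpow_maps: "t \<in> {a..a + 2*pi} \<Longrightarrow> (G ^^ n) t \<in> {a..a + 2*pi}"
  by (induction n) (auto simp del: atLeastAtMost_iff intro: G_maps)

lemma Gpow_sub:
  assumes i: "i \<in> {1..m}" and t: "t \<in> {A (i - 1)..A i}"
  shows "(G ^^ n) t = phinv i ((h ^^ n) (ph i t)) \<and> D ((G ^^ n) t) = 1 - 2 * ((h ^^ n) (ph i t))^2"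
proof -
  have i1: "i \<ge> 1" using i by simp
  have s: "ph i t \<in> {-1..1}" using phi_range[OF i1 t] .
  have eq: "(G ^^ n) t = phinv i ((h ^^ n) (ph i t))"
  proof (induction n)
    case 0 then show ?case using phinv_phi[OF i1] by simp
  next
    case (Suc n)
    have r: "(h ^^ n) (ph i t) \<in> {-1..1}" using hpow_range[OF s] .
    have in_i: "phinv i ((h ^^ n) (ph i t)) \<in> {A (i - 1)..A i}" using phinv_range[OF i1 r] .
    have "(G ^^ Suc n) t = G (phinv i ((h ^^ n) (ph i t)))" using Suc by simp
    also have "\<dots> = phinv i (h (ph i (phinv i ((h ^^ n) (ph i t)))))" using G_sub[OF i in_i] by simp
    also have "\<dots> = phinv i ((h ^^ Suc n) (ph i t))" using phi_phinv[OF i1] by simp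
    finally show ?case .
  qed
  have r: "(h ^^ n) (ph i t) \<in> {-1..1}" using hpow_range[OF s] .
  have in_i: "phinv i ((h ^^ n) (ph i t)) \<in> {A (i - 1)..A i}" using phinv_range[OF i1 r] .
  show ?thesis using eq G_sub[OF i in_i] phi_phinv[OF i1] by simp
qed

lemma Gpow_out: "t \<in> {b..a + 2*pi} \<Longrightarrow> (G ^^ n) t = t"
  by (induction n) (auto simp: G_out)

end


context fsetup begin

lemma twopi_less: "(2*pi*x < 2*pi*y) = (x < (y::real))"
  using pi_gt_zero by simp

lemma sgn_polar: "r > 0 \<Longrightarrow> sgn (complex_of_real r * cis t) = cis t"
proof -
  assume r: "0 < r"
  have "sgn (complex_of_real r * cis t) = sgn (complex_of_real r) * sgn (cis t)" by (rule sgn_mult)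
  also have "sgn (complex_of_real r) = 1" using r by (simp add: sgn_of_real)
  also have "sgn (cis t) = cis t" by (simp add: sgn_div_norm)
  finally show ?thesis by simp
qed

lemma Arg_polar: "\<exists>k::int. t = Arg (complex_of_real (exp r) * cis t) + 2 * pi * of_int k"
proof -
  let ?z = "complex_of_real (exp r) * cis t"
  have "?z \<noteq> 0" by simp
  then have "cis (Arg ?z) = cis t" using sgn_polar[of "exp r" t] by (simp add: cis_Arg)
  then show ?thesis using cis_eq_int[of t "Arg ?z"] by metis
qed

lemma int_small: "\<bar>2 * pi * real_of_int k\<bar> < 2 * pi \<Longrightarrow> k = 0"
proof -
  assume "\<bar>2 * pi * real_of_int k\<bar> < 2 * pi"
  then have "2 * pi * \<bar>real_of_int k\<bar> < 2 * pi * 1" by (simp add: abs_mult)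
  then have "\<bar>real_of_int k\<bar> < 1" by (simp only: twopi_less)
  then show "k = 0" by linarith
qed

lemma ang_rep_eq: "t \<in> {a..b} \<Longrightarrow> ang_rep a b (complex_of_real (exp r) * cis t) = t"
proof -
  assume t: "t \<in> {a..b}"
  let ?z = "complex_of_real (exp r) * cis t"
  obtain k::int where k: "t = Arg ?z + 2 * pi * of_int k" using Arg_polar by blast
  show ?thesis unfolding ang_rep_def
  proof (rule the_equality)
    show "t \<in> {a..b} \<and> (\<exists>k::int. t = Arg ?z + 2 * pi * of_int k)" using t k by blast
  next
    fix t' assume "t' \<in> {a..b} \<and> (\<exists>k::int. t' = Arg ?z + 2 * pi * of_int k)"
    then obtain k' :: int where t': "t' \<in> {a..b}" "t' = Arg ?z + 2 * pi * of_int k'" by blast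
    have "t' - t = 2 * pi * of_int (k' - k)" using k t'(2) by (simp add: algebra_simps)
    moreover have "\<bar>t' - t\<bar> < 2 * pi" using t t'(1) ab2 by auto
    ultimately have "k' - k = 0" using int_small by metis
    then show "t' = t" using k t'(2) by simp
  qed
qed

lemma Fmap_inside:
  assumes t: "t \<in> {a..b}"
  shows "F (complex_of_real (exp r) * cis t) = complex_of_real (exp (r + D t)) * cis (G t)"
proof -
  let ?z = "complex_of_real (exp r) * cis t"
  obtain k::int where k: "t = Arg ?z + 2 * pi * of_int k" using Arg_polar by blast
  have ex: "\<exists>t'\<in>{a..b}. \<exists>k::int. t' = Arg ?z + 2 * pi * of_int k" using t k by blast
  have nz: "?z \<noteq> 0" by simp
  have cm: "cmod ?z = exp r" by (simp add: norm_mult)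
  have "F ?z = polar (phi_inv a b m (idx a b m t) (ph (idx a b m t) t * c (ph (idx a b m t) t)))
       (ln (cmod ?z) + 1 - 2 * (ph (idx a b m t) t)\<^sup>2)"
    unfolding Fmap_def if_not_P[OF nz] if_P[OF ex] Let_def ang_rep_eq[OF t] idx_def[symmetric] ..
  also have "\<dots> = complex_of_real (exp (r + D t)) * cis (G t)"
    unfolding GG_def DD_def if_P[OF t] hh_def polar_def cm by (simp add: algebra_simps)
  finally show ?thesis .
qed

lemma Fmap_outside:
  assumes t: "t \<in> {b<..<a + 2*pi}"
  shows "F (complex_of_real (exp r) * cis t) = complex_of_real (exp (r - 1)) * cis t"
proof -
  let ?z = "complex_of_real (exp r) * cis t"
  obtain k::int where k: "t = Arg ?z + 2 * pi * of_int k" using Arg_polar by blast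
  have nex: "\<not> (\<exists>t'\<in>{a..b}. \<exists>k::int. t' = Arg ?z + 2 * pi * of_int k)"
  proof
    assume "\<exists>t'\<in>{a..b}. \<exists>k::int. t' = Arg ?z + 2 * pi * of_int k"
    then obtain t' k' where t': "t' \<in> {a..b}" "t' = Arg ?z + 2 * pi * of_int (k'::int)" by blast
    have e: "t' - t = 2 * pi * of_int (k' - k)" using k t'(2) by (simp add: algebra_simps)
    have "t' - t < 0" "t' - t > - 2 * pi" using t t'(1) by auto
    then have "2 * pi * real_of_int (k' - k) < 2 * pi * 0" "2 * pi * (-1) < 2 * pi * real_of_int (k' - k)"
      using e by simp_all
    then have "real_of_int (k' - k) < 0" "real_of_int (k' - k) > -1" by (simp_all only: twopi_less)
    then have "k' - k < 0" "k' - k > -1" by simp_all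
    then show False by linarith
  qed
  have nz: "?z \<noteq> 0" by simp
  have cm: "cmod ?z = exp r" by (simp add: norm_mult)
  have ca: "cis (Arg ?z) = cis t" using nz sgn_polar[of "exp r" t] by (simp add: cis_Arg)
  have "F ?z = polar (Arg ?z) (ln (cmod ?z) - 1)"
    unfolding Fmap_def if_not_P[OF nz] if_not_P[OF nex] ..
  then show ?thesis using cm ca by (simp add: polar_def)
qed

lemma Fmap_rep:
  assumes t: "t \<in> {a..a + 2*pi}"
  shows "F (complex_of_real (exp r) * cis t) = complex_of_real (exp (r + D t)) * cis (G t)"
proof (cases "t \<le> b")
  case True then show ?thesis using Fmap_inside t by simp
next
  case False
  then have tb: "t \<in> {b..a + 2*pi}" using t by simp
  show ?thesis
  proof (cases "t = a + 2 * pi")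
    case True
    have ct: "cis t = cis a" using True cis_periodic[of a 1] by simp
    have "a \<in> {a..b}" using ab1 by simp
    then have "F (complex_of_real (exp r) * cis a) = complex_of_real (exp (r + D a)) * cis (G a)"
      by (rule Fmap_inside)
    then show ?thesis using ct G_a G_out[OF tb] by simp
  next
    case False
    then have "t \<in> {b<..<a + 2*pi}" using tb \<open>\<not> t \<le> b\<close> by auto
    then show ?thesis using Fmap_outside G_out[OF tb] by simp
  qed
qed

definition Ssum where "Ssum n t = (\<Sum>j<n. D ((G ^^ j) t))"

lemma Fpow_rep:
  assumes t: "t \<in> {a..a + 2*pi}"
  shows "(F ^^ n) (complex_of_real (exp r) * cis t) = complex_of_real (exp (r + Ssum n t)) * cis ((G ^^ n) t)"
proof (induction n)
  case 0 then show ?case by (simp add: Ssum_def)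
next
  case (Suc n)
  have "(F ^^ Suc n) (complex_of_real (exp r) * cis t) =
        F (complex_of_real (exp (r + Ssum n t)) * cis ((G ^^ n) t))" using Suc by simp
  also have "\<dots> = complex_of_real (exp (r + Ssum n t + D ((G ^^ n) t))) * cis (G ((G ^^ n) t))"
    by (rule Fmap_rep) (rule Gpow_maps[OF t])
  also have "r + Ssum n t + D ((G ^^ n) t) = r + Ssum (Suc n) t" by (simp add: Ssum_def)
  finally show ?case by simp
qed

lemma polar_rep: "z \<noteq> 0 \<Longrightarrow> \<exists>r t. t \<in> {a..<a + 2*pi} \<and> z = complex_of_real (exp r) * cis t"
proof -
  assume z: "z \<noteq> 0"
  define k where "k = \<lfloor>(Arg z - a) / (2 * pi)\<rfloor>"
  define t where "t = Arg z + 2 * pi * of_int (- k)"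
  have k1: "real_of_int k \<le> (Arg z - a) / (2 * pi)" "(Arg z - a) / (2 * pi) < real_of_int k + 1"
    unfolding k_def by linarith+
  have "2 * pi * real_of_int k \<le> Arg z - a" using k1(1) by (simp add: field_simps)
  moreover have "Arg z - a < 2 * pi * (real_of_int k + 1)" using k1(2) by (simp add: field_simps)
  ultimately have tr: "t \<in> {a..<a + 2*pi}" unfolding t_def by (auto simp: algebra_simps)
  have "z = complex_of_real (cmod z) * exp (\<i> * complex_of_real (Arg z))" using Arg_eq[OF z] .
  also have "\<dots> = complex_of_real (exp (ln (cmod z))) * cis t"
  proof -
    have "cis t = cis (Arg z)" unfolding t_def by (rule cis_periodic)
    then show ?thesis using z by (simp add: cis_conv_exp)
  qed
  finally show ?thesis using tr by blast
qed

lemma Fpow_zero: "(F ^^ n) 0 = 0"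
  by (induction n) (auto simp: Fmap_def)

lemma Ssum_sub:
  assumes i: "i \<in> {1..m}" and t: "t \<in> {A (i - 1)..A i}"
  shows "Ssum n t = (\<Sum>j<n. 1 - 2 * ((h ^^ j) (ph i t))^2)"
  unfolding Ssum_def by (rule sum.cong[OF refl]) (use Gpow_sub[OF i t] in blast)

lemma Ssum_out: "t \<in> {b..a + 2*pi} \<Longrightarrow> Ssum n t = - real n"
  unfolding Ssum_def using Gpow_out G_out by simp

lemma no_fix:
  assumes z: "z \<noteq> 0" and n: "n \<ge> 1"
  shows "(F ^^ n) z \<noteq> z"
proof
  assume fz: "(F ^^ n) z = z"
  obtain r t where t: "t \<in> {a..<a + 2*pi}" and zr: "z = complex_of_real (exp r) * cis t"
    using polar_rep[OF z] by blast
  have t': "t \<in> {a..a + 2*pi}" using t by simp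
  have eq: "complex_of_real (exp (r + Ssum n t)) * cis ((G ^^ n) t) = complex_of_real (exp r) * cis t"
    using fz Fpow_rep[OF t', of n r] zr by simp
  have "norm (complex_of_real (exp (r + Ssum n t)) * cis ((G ^^ n) t)) = norm (complex_of_real (exp r) * cis t)"
    using eq by simp
  then have "exp (r + Ssum n t) = exp r" by (simp add: norm_mult)
  then have S0: "Ssum n t = 0" by simp
  then have ceq: "cis ((G ^^ n) t) = cis t" using eq by simp
  show False
  proof (cases "t \<le> b")
    case True
    then have "t \<in> {a..b}" using t by simp
    then obtain i where i: "i \<in> {1..m}" "t \<in> {A (i - 1)..A i}" using cover by blast
    have i1: "i \<ge> 1" using i by simp
    define s where "s = ph i t"
    have s: "s \<in> {-1..1}" unfolding s_def using phi_range[OF i1 i(2)] .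
    have gn: "(G ^^ n) t = phinv i ((h ^^ n) s)" using Gpow_sub[OF i] s_def by simp
    have "phinv i ((h ^^ n) s) \<in> {A (i - 1)..A i}" using phinv_range[OF i1 hpow_range[OF s]] .
    then have gin: "(G ^^ n) t \<in> {a..b}" using gn A_in[OF i(1)] by auto
    obtain k::int where k: "(G ^^ n) t = t + 2 * pi * of_int k" using cis_eq_int[OF ceq] by blast
    have "\<bar>2 * pi * of_int k\<bar> < 2 * pi" using k gin \<open>t \<in> {a..b}\<close> ab2 by auto
    then have "k = 0" by (rule int_small)
    then have "phinv i ((h ^^ n) s) = phinv i s" using k gn phinv_phi[OF i1] s_def by simp
    then have "(h ^^ n) s = s" using phi_phinv[OF i1] by metis
    then have hs: "h s = s" using h_periodic[OF s n] by simp
    then have s3: "s \<in> {-1, 0, 1}" using h_fix[OF s] by simp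
    have "Ssum n t = (\<Sum>j<n. 1 - 2 * s^2)" using Ssum_sub[OF i] s_def hpow_fix[OF hs] by simp
    also have "\<dots> = real n * (1 - 2 * s^2)" by simp
    finally have "real n * (1 - 2 * s^2) = 0" using S0 by simp
    then show False using s3 n by auto
  next
    case False
    then have "t \<in> {b..a + 2*pi}" using t by simp
    then have "Ssum n t = - real n" by (rule Ssum_out)
    then show False using S0 n by simp
  qed
qed

lemma scale:
  assumes r: "r > 0"
  shows "(F ^^ n) (complex_of_real r * z) = complex_of_real r * (F ^^ n) z"
proof (cases "z = 0")
  case True then show ?thesis by (simp add: Fpow_zero)
next
  case False
  obtain r0 t where t: "t \<in> {a..<a + 2*pi}" and zr: "z = complex_of_real (exp r0) * cis t"
    using polar_rep[OF False] by blast
  have t': "t \<in> {a..a + 2*pi}" using t by simp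
  have "complex_of_real r * z = complex_of_real (exp (ln r + r0)) * cis t"
    using r zr by (simp add: exp_add)
  then have "(F ^^ n) (complex_of_real r * z) = complex_of_real (exp (ln r + r0 + Ssum n t)) * cis ((G ^^ n) t)"
    using Fpow_rep[OF t'] by simp
  also have "\<dots> = complex_of_real r * (complex_of_real (exp (r0 + Ssum n t)) * cis ((G ^^ n) t))"
    using r by (simp add: exp_add)
  also have "\<dots> = complex_of_real r * (F ^^ n) z" using Fpow_rep[OF t'] zr by simp
  finally show ?thesis .
qed

end


context fsetup begin

definition W where "W n t = 1 - (F ^^ n) (cis t) / cis t"

lemma W_rep: "t \<in> {a..a + 2*pi} \<Longrightarrow>
  W n t = 1 - complex_of_real (exp (Ssum n t)) * cis ((G ^^ n) t - t)"
  using Fpow_rep[of t n 0] by (simp add: W_def cis_divide[symmetric])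

lemma W_nz: "n \<ge> 1 \<Longrightarrow> W n t \<noteq> 0"
  using no_fix[of "cis t" n] by (simp add: W_def)

lemma W_periodic: "W n (t + 2 * pi * of_int k) = W n t"
  by (simp add: W_def cis_periodic)

lemma ph_cont: "i \<ge> 1 \<Longrightarrow> continuous_on S (ph i)"
  unfolding phi_def by (intro continuous_intros) (use A_step len_pos in auto)

lemma G_piece_cont: "i \<in> {1..m} \<Longrightarrow> continuous_on {A (i - 1)..A i} (\<lambda>t. phinv i (h (ph i t)))"
proof -
  assume i: "i \<in> {1..m}"
  have "continuous_on {A (i - 1)..A i} (\<lambda>t. c (ph i t))"
    by (rule continuous_on_compose2[OF cc ph_cont]) (use phi_range i in auto)
  then show ?thesis unfolding phi_inv_def hh_def
    by (intro continuous_intros ph_cont) (use i in auto)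
qed

lemma union_eq: "{a..a + 2*pi} = (\<Union>i\<in>{0..m}. (if i = 0 then {b..a + 2*pi} else {A (i - 1)..A i}))"
proof (rule set_eqI iffI)+
  fix t assume t: "t \<in> {a..a + 2*pi}"
  show "t \<in> (\<Union>i\<in>{0..m}. (if i = 0 then {b..a + 2*pi} else {A (i - 1)..A i}))"
  proof (cases "t \<le> b")
    case True
    then have "t \<in> {a..b}" using t by auto
    then obtain i where "i \<in> {1..m}" "t \<in> {A (i - 1)..A i}" using cover by blast
    then show ?thesis by (intro UN_I[of i]) auto
  next
    case False then show ?thesis using t by (intro UN_I[of 0]) auto
  qed
next
  fix t assume "t \<in> (\<Union>i\<in>{0..m}. (if i = 0 then {b..a + 2*pi} else {A (i - 1)..A i}))"
  then obtain i where i: "i \<in> {0..m}" "t \<in> (if i = 0 then {b..a + 2*pi} else {A (i - 1)..A i})" by blast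
  show "t \<in> {a..a + 2*pi}"
  proof (cases "i = 0")
    case True then show ?thesis using i ab1 by auto
  next
    case False then have "i \<in> {1..m}" using i by auto
    then show ?thesis using i A_in[of i] b_le False by auto
  qed
qed

lemma piecewise_cont:
  assumes p0: "continuous_on {b..a + 2*pi} f"
    and pi: "\<And>i. i \<in> {1..m} \<Longrightarrow> continuous_on {A (i - 1)..A i} f"
  shows "continuous_on {a..a + 2*pi} f"
  unfolding union_eq
proof (rule continuous_on_closed_Union)
  fix i assume "i \<in> {0..m}"
  then show "continuous_on (if i = 0 then {b..a + 2*pi} else {A (i - 1)..A i}) f"
    using p0 pi by (cases "i = 0") auto
qed auto

lemma G_cont: "continuous_on {a..a + 2*pi} G"
proof (rule piecewise_cont)
  show "continuous_on {b..a + 2*pi} G"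
    by (rule continuous_on_cong[THEN iffD2, OF refl _ continuous_on_id]) (use G_out in auto)
  fix i assume i: "i \<in> {1..m}"
  show "continuous_on {A (i - 1)..A i} G"
    by (rule continuous_on_cong[THEN iffD2, OF refl _ G_piece_cont[OF i]]) (use G_sub[OF i] in auto)
qed

lemma D_cont: "continuous_on {a..a + 2*pi} D"
proof (rule piecewise_cont)
  show "continuous_on {b..a + 2*pi} D"
    by (rule continuous_on_cong[THEN iffD2, OF refl _ continuous_on_const[of _ "-1"]]) (use G_out in auto)
  fix i assume i: "i \<in> {1..m}"
  have "continuous_on {A (i - 1)..A i} (\<lambda>t. 1 - 2 * (ph i t)^2)" by (intro continuous_intros ph_cont) (use i in auto)
  then show "continuous_on {A (i - 1)..A i} D"
    by (rule continuous_on_cong[THEN iffD2, OF refl, rotated]) (use G_sub[OF i] in auto)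
qed

lemma Gpow_cont: "continuous_on {a..a + 2*pi} (G ^^ n)"
proof (induction n)
  case 0 then show ?case by (simp add: continuous_on_id)
next
  case (Suc n)
  have "continuous_on {a..a + 2*pi} (\<lambda>t. G ((G ^^ n) t))"
    by (rule continuous_on_compose2[OF G_cont Suc]) (use Gpow_maps in auto)
  then show ?case by (simp add: o_def)
qed

lemma Ssum_cont: "continuous_on {a..a + 2*pi} (Ssum n)"
proof -
  have "continuous_on {a..a + 2*pi} (\<lambda>t. \<Sum>j<n. D ((G ^^ j) t))"
  proof (intro continuous_on_sum)
    fix j
    show "continuous_on {a..a + 2*pi} (\<lambda>t. D ((G ^^ j) t))"
      by (rule continuous_on_compose2[OF D_cont Gpow_cont]) (use Gpow_maps in auto)
  qed
  then show ?thesis unfolding Ssum_def[abs_def] .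
qed

lemma W_cont: "continuous_on {a..a + 2*pi} (W n)"
proof -
  have "continuous_on {a..a + 2*pi} (\<lambda>t. 1 - complex_of_real (exp (Ssum n t)) * cis ((G ^^ n) t - t))"
    by (intro continuous_intros Ssum_cont Gpow_cont)
  then show ?thesis
    by (rule continuous_on_cong[THEN iffD2, OF refl, rotated]) (use W_rep in auto)
qed

lemma W_cont_shift: "continuous_on {a + 2 * pi * of_int k..a + 2 * pi * of_int k + 2*pi} (W n)"
proof -
  have "continuous_on {a + 2 * pi * of_int k..a + 2 * pi * of_int k + 2*pi} (\<lambda>t. W n (t + 2 * pi * of_int (-k)))"
    by (rule continuous_on_compose2[OF W_cont]) (auto intro!: continuous_intros)
  moreover have "(\<lambda>t. W n (t + 2 * pi * of_int (-k))) = W n" using W_periodic by (intro ext) blast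
  ultimately show ?thesis by metis
qed

end



lemma Arg_ii: "Arg \<i> = pi / 2"
  by (rule cis_Arg_unique) (auto simp: sgn_div_norm)

lemma Arg_mii: "Arg (- \<i>) = - (pi / 2)"
proof (rule cis_Arg_unique)
  show "sgn (- \<i>) = cis (- (pi / 2))" by (simp add: sgn_div_norm)
  show "- pi < - (pi / 2)" "- (pi / 2) \<le> pi" using pi_gt_zero by linarith+
qed

lemma Arg_pos_mi: "x > 0 \<Longrightarrow> Arg (complex_of_real x * - \<i>) = - (pi / 2)"
  using Arg_times_of_real[of x "- \<i>"] Arg_mii by simp

lemma Arg_neg_mi: "x < 0 \<Longrightarrow> Arg (complex_of_real x * - \<i>) = pi / 2"
proof -
  assume x: "x < 0"
  have "complex_of_real x * - \<i> = complex_of_real (- x) * \<i>" by simp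
  then show ?thesis using Arg_times_of_real[of "-x" "\<i>"] Arg_ii x by simp
qed

lemma Arg_pos_i: "x > 0 \<Longrightarrow> Arg (complex_of_real x * \<i>) = pi / 2"
  using Arg_times_of_real[of x "\<i>"] Arg_ii by simp

lemma Arg_neg_i: "x < 0 \<Longrightarrow> Arg (complex_of_real x * \<i>) = - (pi / 2)"
proof -
  assume x: "x < 0"
  have "complex_of_real x * \<i> = complex_of_real (- x) * - \<i>" by simp
  then show ?thesis using Arg_times_of_real[of "-x" "- \<i>"] Arg_mii x by simp
qed

context fsetup begin

lemma W_sub:
  assumes i: "i \<in> {1..m}" and t: "t \<in> {A (i - 1)..A i}"
  shows "W n t = 1 - complex_of_real (exp (\<Sum>j<n. 1 - 2 * ((h ^^ j) (ph i t))^2)) *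
           cis (((h ^^ n) (ph i t) - ph i t) * len / 2)"
proof -
  have i1: "i \<ge> 1" using i by simp
  have tt: "t \<in> {a..a + 2*pi}" using sub_ab[OF i t] b_le by auto
  have "(G ^^ n) t - t = phinv i ((h ^^ n) (ph i t)) - phinv i (ph i t)"
    using Gpow_sub[OF i t] phinv_phi[OF i1] by simp
  also have "\<dots> = ((h ^^ n) (ph i t) - ph i t) * len / 2"
    by (simp add: phinv_eq[OF i1] field_simps)
  finally have eq: "(G ^^ n) t - t = ((h ^^ n) (ph i t) - ph i t) * len / 2" .
  have W1: "W n t = 1 - complex_of_real (exp (Ssum n t)) * cis ((G ^^ n) t - t)" using W_rep[OF tt] .
  show ?thesis unfolding W1 Ssum_sub[OF i t] eq ..
qed

lemma W_fixpt:
  assumes i: "i \<in> {1..m}" and t: "t \<in> {A (i - 1)..A i}" and hs: "h (ph i t) = ph i t"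
  shows "W n t = complex_of_real (1 - exp (real n * (1 - 2 * (ph i t)^2)))"
  using W_sub[OF i t, of n] hpow_fix[OF hs] by simp

lemma W_left: "i \<in> {1..m} \<Longrightarrow> W n (A (i - 1)) = complex_of_real (1 - exp (- real n))"
proof -
  assume i: "i \<in> {1..m}"
  have t: "A (i - 1) \<in> {A (i - 1)..A i}" using A_mono[of "i - 1" i] by simp
  have p: "ph i (A (i - 1)) = -1" using phi_left i by simp
  show ?thesis using W_fixpt[OF i t] p h_vals by simp
qed

lemma W_right: "i \<in> {1..m} \<Longrightarrow> W n (A i) = complex_of_real (1 - exp (- real n))"
proof -
  assume i: "i \<in> {1..m}"
  have t: "A i \<in> {A (i - 1)..A i}" using A_mono[of "i - 1" i] by simp
  have p: "ph i (A i) = 1" using phi_right i by simp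
  show ?thesis using W_fixpt[OF i t] p h_vals by simp
qed

lemma mid_in: "i \<in> {1..m} \<Longrightarrow> phinv i 0 \<in> {A (i - 1)..A i}"
  using phinv_range[of i 0] by simp

lemma W_mid: "i \<in> {1..m} \<Longrightarrow> W n (phinv i 0) = complex_of_real (1 - exp (real n))"
proof -
  assume i: "i \<in> {1..m}"
  have p: "ph i (phinv i 0) = 0" using phi_phinv i by simp
  show ?thesis using W_fixpt[OF i mid_in[OF i]] p h_vals by simp
qed

lemma W_out: "t \<in> {b..a + 2*pi} \<Longrightarrow> W n t = complex_of_real (1 - exp (- real n))"
proof -
  assume t: "t \<in> {b..a + 2*pi}"
  then have tt: "t \<in> {a..a + 2*pi}" using ab1 by auto
  show ?thesis using W_rep[OF tt] Ssum_out[OF t] Gpow_out[OF t] by simp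
qed

lemma Im_W:
  assumes i: "i \<in> {1..m}" and t: "t \<in> {A (i - 1)..A i}"
  shows "Im (W n t) = - exp (\<Sum>j<n. 1 - 2 * ((h ^^ j) (ph i t))^2) * sin (((h ^^ n) (ph i t) - ph i t) * len / 2)"
  using W_sub[OF i t, of n] by simp

end


context fsetup begin

lemma sin_nonneg_small: "0 \<le> x \<Longrightarrow> x \<le> len / 2 \<Longrightarrow> sin x \<ge> 0"
  using len_lt by (intro sin_ge_zero) auto

lemma Im_up:
  assumes i: "i \<in> {1..m}" and t: "t \<in> {A (i - 1)..A i}"
    and d: "-1 \<le> (h ^^ n) (ph i t) - ph i t" "(h ^^ n) (ph i t) - ph i t \<le> 0"
  shows "Im (W n t) \<ge> 0"
proof -
  define x where "x = ((h ^^ n) (ph i t) - ph i t) * len / 2"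
  define dd where "dd = (h ^^ n) (ph i t) - ph i t"
  have "(- dd) * len \<le> 1 * len" using d len_pos unfolding dd_def by (intro mult_right_mono) auto
  moreover have "0 \<le> (- dd) * len" using d len_pos unfolding dd_def by (intro mult_nonneg_nonneg) auto
  moreover have "- x = (- dd) * len / 2" unfolding x_def dd_def by (simp add: field_simps)
  ultimately have "0 \<le> - x" "- x \<le> len / 2" by linarith+
  then have "sin (- x) \<ge> 0" by (rule sin_nonneg_small)
  then have "sin x \<le> 0" by simp
  then show ?thesis using Im_W[OF i t, of n] unfolding x_def[symmetric]
    by (simp add: mult_nonneg_nonpos)
qed

lemma Im_down:
  assumes i: "i \<in> {1..m}" and t: "t \<in> {A (i - 1)..A i}"
    and d: "0 \<le> (h ^^ n) (ph i t) - ph i t" "(h ^^ n) (ph i t) - ph i t \<le> 1"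
  shows "Im (W n t) \<le> 0"
proof -
  define x where "x = ((h ^^ n) (ph i t) - ph i t) * len / 2"
  define dd where "dd = (h ^^ n) (ph i t) - ph i t"
  have "dd * len \<le> 1 * len" using d len_pos unfolding dd_def by (intro mult_right_mono) auto
  moreover have "0 \<le> dd * len" using d len_pos unfolding dd_def by (intro mult_nonneg_nonneg) auto
  moreover have "x = dd * len / 2" unfolding x_def dd_def by simp
  ultimately have "0 \<le> x" "x \<le> len / 2" by linarith+
  then have "sin x \<ge> 0" by (rule sin_nonneg_small)
  then show ?thesis using Im_W[OF i t, of n] unfolding x_def[symmetric]
    by simp
qed

lemma phi_left_half: "i \<in> {1..m} \<Longrightarrow> t \<in> {A (i - 1)..phinv i 0} \<Longrightarrow> t \<in> {A (i - 1)..A i} \<and> ph i t \<in> {-1..0}"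
proof -
  assume i: "i \<in> {1..m}" and t: "t \<in> {A (i - 1)..phinv i 0}"
  have i1: "i \<ge> 1" using i by simp
  have tt: "t \<in> {A (i - 1)..A i}" using t mid_in[OF i] by auto
  have "ph i t \<le> 0" using t len_pos by (auto simp: phi_eq[OF i1] phinv_eq[OF i1] field_simps)
  then show ?thesis using tt phi_range[OF i1 tt] by auto
qed

lemma phi_right_half: "i \<in> {1..m} \<Longrightarrow> t \<in> {phinv i 0..A i} \<Longrightarrow> t \<in> {A (i - 1)..A i} \<and> ph i t \<in> {0..1}"
proof -
  assume i: "i \<in> {1..m}" and t: "t \<in> {phinv i 0..A i}"
  have i1: "i \<ge> 1" using i by simp
  have tt: "t \<in> {A (i - 1)..A i}" using t mid_in[OF i] by auto
  have "ph i t \<ge> 0" using t len_pos by (auto simp: phi_eq[OF i1] phinv_eq[OF i1] field_simps)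
  then show ?thesis using tt phi_range[OF i1 tt] by auto
qed

lemma dyn_ge1_left:
  assumes c2: "\<forall>s\<in>{-1..1}. c s \<ge> 1" and s: "s \<in> {-1..0}"
  shows "(h ^^ n) s \<in> {-1..s}"
proof (induction n)
  case 0 then show ?case using s by simp
next
  case (Suc n)
  define u where "u = (h ^^ n) s"
  have u: "u \<in> {-1..0}" using Suc s unfolding u_def by auto
  have "u * c u \<le> u * 1" by (rule mult_left_mono_neg) (use c2 u in auto)
  then have "h u \<le> u" unfolding hh_def by simp
  moreover have "h u \<ge> -1" using h_range[of u] u by auto
  ultimately show ?case using Suc unfolding u_def by auto
qed

lemma dyn_ge1_right:
  assumes c2: "\<forall>s\<in>{-1..1}. c s \<ge> 1" and s: "s \<in> {0..1}"
  shows "(h ^^ n) s \<in> {s..1}"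
proof (induction n)
  case 0 then show ?case using s by simp
next
  case (Suc n)
  define u where "u = (h ^^ n) s"
  have u: "u \<in> {0..1}" using Suc s unfolding u_def by auto
  have "u * 1 \<le> u * c u" by (rule mult_left_mono) (use c2 u in auto)
  then have "h u \<ge> u" unfolding hh_def by simp
  moreover have "h u \<le> 1" using h_range[of u] u by auto
  ultimately show ?case using Suc unfolding u_def by auto
qed

lemma dyn_le1_left:
  assumes c2: "\<forall>s\<in>{-1..1}. c s \<le> 1" and s: "s \<in> {-1..0}"
  shows "(h ^^ n) s \<in> {s..0}"
proof (induction n)
  case 0 then show ?case using s by simp
next
  case (Suc n)
  define u where "u = (h ^^ n) s"
  have u: "u \<in> {-1..0}" using Suc s unfolding u_def by auto
  have "u * 1 \<le> u * c u" by (rule mult_left_mono_neg) (use c2 u in auto)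
  then have "h u \<ge> u" unfolding hh_def by simp
  moreover have "h u \<le> 0" using h_mono[of u 0] u h_vals by auto
  ultimately show ?case using Suc unfolding u_def by auto
qed

lemma dyn_le1_right:
  assumes c2: "\<forall>s\<in>{-1..1}. c s \<le> 1" and s: "s \<in> {0..1}"
  shows "(h ^^ n) s \<in> {0..s}"
proof (induction n)
  case 0 then show ?case using s by simp
next
  case (Suc n)
  define u where "u = (h ^^ n) s"
  have u: "u \<in> {0..1}" using Suc s unfolding u_def by auto
  have "u * c u \<le> u * 1" by (rule mult_left_mono) (use c2 u in auto)
  then have "h u \<le> u" unfolding hh_def by simp
  moreover have "h u \<ge> 0" using h_mono[of 0 u] u h_vals by auto
  ultimately show ?case using Suc unfolding u_def by auto
qed

end


context fsetup begin

lemma piece_up: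
  assumes n: "n \<ge> 1" and N: "continuous_on {a..a + 2*pi} N" "\<And>t. t \<in> {a..a + 2*pi} \<Longrightarrow> sgn (W n t) = cis (N t)"
    and uv: "a \<le> u" "u \<le> v" "v \<le> a + 2*pi"
    and im: "\<And>t. t \<in> {u..v} \<Longrightarrow> Im (W n t) \<ge> 0"
  shows "N v - N u = Arg (W n v * - \<i>) - Arg (W n u * - \<i>)"
proof -
  have sub: "{u..v} \<subseteq> {a..a + 2*pi}" using uv by auto
  have "N v - N u = Arg (W n v * cis (- (pi / 2))) - Arg (W n u * cis (- (pi / 2)))"
  proof (rule ray_lemma)
    show "continuous_on {u..v} (W n)" using W_cont sub by (rule continuous_on_subset)
    show "continuous_on {u..v} N" using N(1) sub by (rule continuous_on_subset)
    show "u \<le> v" by fact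
    fix t assume t: "t \<in> {u..v}"
    then show "sgn (W n t) = cis (N t)" using N(2) sub by auto
    show "W n t * cis (- (pi / 2)) \<notin> \<real>\<^sub>\<le>\<^sub>0"
    proof
      assume "W n t * cis (- (pi / 2)) \<in> \<real>\<^sub>\<le>\<^sub>0"
      then have "Im (W n t) \<le> 0" "Re (W n t) = 0" by (auto simp: complex_nonpos_Reals_iff)
      then have "W n t = 0" using im[OF t] by (simp add: complex_eq_iff)
      then show False using W_nz[OF n] by simp
    qed
  qed
  then show ?thesis by simp
qed

lemma piece_down:
  assumes n: "n \<ge> 1" and N: "continuous_on {a..a + 2*pi} N" "\<And>t. t \<in> {a..a + 2*pi} \<Longrightarrow> sgn (W n t) = cis (N t)"
    and uv: "a \<le> u" "u \<le> v" "v \<le> a + 2*pi"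
    and im: "\<And>t. t \<in> {u..v} \<Longrightarrow> Im (W n t) \<le> 0"
  shows "N v - N u = Arg (W n v * \<i>) - Arg (W n u * \<i>)"
proof -
  have sub: "{u..v} \<subseteq> {a..a + 2*pi}" using uv by auto
  have "N v - N u = Arg (W n v * cis (pi / 2)) - Arg (W n u * cis (pi / 2))"
  proof (rule ray_lemma)
    show "continuous_on {u..v} (W n)" using W_cont sub by (rule continuous_on_subset)
    show "continuous_on {u..v} N" using N(1) sub by (rule continuous_on_subset)
    show "u \<le> v" by fact
    fix t assume t: "t \<in> {u..v}"
    then show "sgn (W n t) = cis (N t)" using N(2) sub by auto
    show "W n t * cis (pi / 2) \<notin> \<real>\<^sub>\<le>\<^sub>0"
    proof
      assume "W n t * cis (pi / 2) \<in> \<real>\<^sub>\<le>\<^sub>0"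
      then have "Im (W n t) \<ge> 0" "Re (W n t) = 0" by (auto simp: complex_nonpos_Reals_iff)
      then have "W n t = 0" using im[OF t] by (simp add: complex_eq_iff)
      then show False using W_nz[OF n] by simp
    qed
  qed
  then show ?thesis by simp
qed

lemma piece_out:
  assumes n: "n \<ge> 1" and N: "continuous_on {a..a + 2*pi} N" "\<And>t. t \<in> {a..a + 2*pi} \<Longrightarrow> sgn (W n t) = cis (N t)"
  shows "N (a + 2*pi) - N b = 0"
proof -
  have sub: "{b..a + 2*pi} \<subseteq> {a..a + 2*pi}" using ab1 by auto
  have pos: "1 - exp (- real n) > 0" using n by simp
  have "N (a + 2*pi) - N b = Arg (W n (a + 2*pi) * cis 0) - Arg (W n b * cis 0)"
  proof (rule ray_lemma)
    show "continuous_on {b..a + 2*pi} (W n)" using W_cont sub by (rule continuous_on_subset)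
    show "continuous_on {b..a + 2*pi} N" using N(1) sub by (rule continuous_on_subset)
    show "b \<le> a + 2*pi" by (rule b_le)
    fix t assume t: "t \<in> {b..a + 2*pi}"
    then show "sgn (W n t) = cis (N t)" using N(2) sub by auto
    show "W n t * cis 0 \<notin> \<real>\<^sub>\<le>\<^sub>0" using W_out[OF t] pos by (auto simp: complex_nonpos_Reals_iff)
  qed
  also have "\<dots> = 0" using W_out[of "a + 2*pi" n] W_out[of b n] b_le pos by simp
  finally show ?thesis .
qed

lemma vals: "n \<ge> 1 \<Longrightarrow> 1 - exp (- real n) > 0 \<and> 1 - exp (real n) < 0" by simp

lemma sub_incr2:
  assumes c2: "\<forall>s\<in>{-1..1}. c s \<ge> 1" and n: "n \<ge> 1"
    and N: "continuous_on {a..a + 2*pi} N" "\<And>t. t \<in> {a..a + 2*pi} \<Longrightarrow> sgn (W n t) = cis (N t)"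
    and i: "i \<in> {1..m}"
  shows "N (A i) - N (A (i - 1)) = 2 * pi"
proof -
  define mid where "mid = phinv i 0"
  have mi: "mid \<in> {A (i - 1)..A i}" using mid_in[OF i] unfolding mid_def .
  have ai: "a \<le> A (i - 1)" "A i \<le> b" using A_in[OF i] by auto
  have left: "N mid - N (A (i - 1)) = Arg (W n mid * - \<i>) - Arg (W n (A (i - 1)) * - \<i>)"
  proof (rule piece_up[OF n N])
    show "a \<le> A (i - 1)" "A (i - 1) \<le> mid" "mid \<le> a + 2*pi" using ai mi b_le by auto
    fix t assume t: "t \<in> {A (i - 1)..mid}"
    note th = phi_left_half[OF i t[unfolded mid_def]]
    have "(h ^^ n) (ph i t) \<in> {-1..ph i t}" using dyn_ge1_left[OF c2] th by simp
    then show "Im (W n t) \<ge> 0" using Im_up[OF i] th by simp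
  qed
  have right: "N (A i) - N mid = Arg (W n (A i) * \<i>) - Arg (W n mid * \<i>)"
  proof (rule piece_down[OF n N])
    show "a \<le> mid" "mid \<le> A i" "A i \<le> a + 2*pi" using ai mi b_le by auto
    fix t assume t: "t \<in> {mid..A i}"
    note th = phi_right_half[OF i t[unfolded mid_def]]
    have "(h ^^ n) (ph i t) \<in> {ph i t..1}" using dyn_ge1_right[OF c2] th by simp
    then show "Im (W n t) \<le> 0" using Im_down[OF i] th by simp
  qed
  have "N (A i) - N (A (i - 1)) = (N (A i) - N mid) + (N mid - N (A (i - 1)))" by simp
  also have "\<dots> = pi / 2 - (- (pi / 2)) + (pi / 2 - (- (pi / 2)))"
    unfolding left right W_left[OF i] W_right[OF i] W_mid[OF i, folded mid_def]
      Arg_pos_i[OF vals[OF n, THEN conjunct1]] Arg_neg_i[OF vals[OF n, THEN conjunct2]]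
      Arg_pos_mi[OF vals[OF n, THEN conjunct1]] Arg_neg_mi[OF vals[OF n, THEN conjunct2]] ..
  finally show ?thesis by simp
qed

lemma sub_incr1:
  assumes c2: "\<forall>s\<in>{-1..1}. c s \<le> 1" and n: "n \<ge> 1"
    and N: "continuous_on {a..a + 2*pi} N" "\<And>t. t \<in> {a..a + 2*pi} \<Longrightarrow> sgn (W n t) = cis (N t)"
    and i: "i \<in> {1..m}"
  shows "N (A i) - N (A (i - 1)) = - 2 * pi"
proof -
  define mid where "mid = phinv i 0"
  have mi: "mid \<in> {A (i - 1)..A i}" using mid_in[OF i] unfolding mid_def .
  have ai: "a \<le> A (i - 1)" "A i \<le> b" using A_in[OF i] by auto
  have left: "N mid - N (A (i - 1)) = Arg (W n mid * \<i>) - Arg (W n (A (i - 1)) * \<i>)"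
  proof (rule piece_down[OF n N])
    show "a \<le> A (i - 1)" "A (i - 1) \<le> mid" "mid \<le> a + 2*pi" using ai mi b_le by auto
    fix t assume t: "t \<in> {A (i - 1)..mid}"
    note th = phi_left_half[OF i t[unfolded mid_def]]
    have "(h ^^ n) (ph i t) \<in> {ph i t..0}" using dyn_le1_left[OF c2] th by simp
    then show "Im (W n t) \<le> 0" using Im_down[OF i] th by simp
  qed
  have right: "N (A i) - N mid = Arg (W n (A i) * - \<i>) - Arg (W n mid * - \<i>)"
  proof (rule piece_up[OF n N])
    show "a \<le> mid" "mid \<le> A i" "A i \<le> a + 2*pi" using ai mi b_le by auto
    fix t assume t: "t \<in> {mid..A i}"
    note th = phi_right_half[OF i t[unfolded mid_def]]
    have "(h ^^ n) (ph i t) \<in> {0..ph i t}" using dyn_le1_right[OF c2] th by simp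
    then show "Im (W n t) \<ge> 0" using Im_up[OF i] th by simp
  qed
  have "N (A i) - N (A (i - 1)) = (N (A i) - N mid) + (N mid - N (A (i - 1)))" by simp
  also have "\<dots> = (- (pi / 2)) - pi / 2 + (- (pi / 2) - pi / 2)"
    unfolding left right W_left[OF i] W_right[OF i] W_mid[OF i, folded mid_def]
      Arg_pos_i[OF vals[OF n, THEN conjunct1]] Arg_neg_i[OF vals[OF n, THEN conjunct2]]
      Arg_pos_mi[OF vals[OF n, THEN conjunct1]] Arg_neg_mi[OF vals[OF n, THEN conjunct2]] ..
  finally show ?thesis by simp
qed

lemma total:
  assumes n: "n \<ge> 1"
    and N: "continuous_on {a..a + 2*pi} N" "\<And>t. t \<in> {a..a + 2*pi} \<Longrightarrow> sgn (W n t) = cis (N t)"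
    and sub: "\<And>i. i \<in> {1..m} \<Longrightarrow> N (A i) - N (A (i - 1)) = x"
  shows "N (a + 2*pi) - N a = real m * x"
proof -
  have "N (a + 2*pi) - N a = (N (a + 2*pi) - N b) + (N (A m) - N (A 0))" using Am A0 by simp
  also have "N (a + 2*pi) - N b = 0" by (rule piece_out[OF n N])
  also have "N (A m) - N (A 0) = (\<Sum>i<m. N (A (Suc i)) - N (A i))"
    by (rule sum_lessThan_telescope[symmetric])
  also have "\<dots> = (\<Sum>i<m. x)"
  proof (rule sum.cong[OF refl])
    fix i assume "i \<in> {..<m}"
    then have "Suc i \<in> {1..m}" by auto
    then show "N (A (Suc i)) - N (A i) = x" using sub by fastforce
  qed
  finally show ?thesis by simp
qed

end


context fsetup begin

lemma index_lift:
  assumes n: "n \<ge> 1"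
    and HN: "\<And>N. continuous_on {a..a + 2*pi} N \<Longrightarrow> (\<forall>t\<in>{a..a + 2*pi}. sgn (W n t) = cis (N t))
              \<Longrightarrow> N (a + 2*pi) - N a = 2 * pi * d0"
  shows "\<exists>M. continuous_on {0..2*pi} M \<and> (\<forall>t\<in>{0..2*pi}. sgn (W n t) = cis (M t)) \<and> M (2*pi) - M 0 = 2 * pi * d0"
proof -
  define k where "k = \<lceil>a / (2 * pi)\<rceil>"
  define a' where "a' = a - 2 * pi * of_int k"
  have k1: "a / (2 * pi) \<le> of_int k" "of_int k < a / (2 * pi) + 1" unfolding k_def by linarith+
  have "a \<le> 2 * pi * of_int k" using k1(1) by (simp add: field_simps)
  moreover have "2 * pi * of_int k < a + 2 * pi" using k1(2) by (simp add: field_simps)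
  ultimately have a'1: "a' \<le> 0" "a' > - 2 * pi" unfolding a'_def by auto
  have c1: "continuous_on {a'..a' + 2*pi} (W n)"
    using W_cont_shift[of "- k" n] unfolding a'_def by simp
  have c2: "continuous_on {a' + 2*pi..a' + 2*pi + 2*pi} (W n)"
    using W_cont_shift[of "- k + 1" n] unfolding a'_def by (simp add: algebra_simps)
  have un: "{a'..a' + 4*pi} = {a'..a' + 2*pi} \<union> {a' + 2*pi..a' + 2*pi + 2*pi}" by auto
  have cW: "continuous_on {a'..a' + 4*pi} (W n)" unfolding un
    by (rule continuous_on_closed_Un[OF _ _ c1 c2]) auto
  obtain M where M: "continuous_on {a'..a' + 4*pi} M" "\<And>t. t \<in> {a'..a' + 4*pi} \<Longrightarrow> sgn (W n t) = cis (M t)"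
    using lift_exists[OF cW] W_nz[OF n] by blast
  define N where "N t = M (t - 2 * pi * of_int k)" for t
  have Nc: "continuous_on {a..a + 2*pi} N" unfolding N_def
    by (rule continuous_on_compose2[OF M(1)]) (auto intro!: continuous_intros simp: a'_def)
  have Nl: "\<forall>t\<in>{a..a + 2*pi}. sgn (W n t) = cis (N t)"
  proof
    fix t assume t: "t \<in> {a..a + 2*pi}"
    have "W n t = W n (t - 2 * pi * of_int k)" using W_periodic[of n "t - 2 * pi * of_int k" k] by simp
    also have "sgn \<dots> = cis (M (t - 2 * pi * of_int k))" using t by (intro M(2)) (auto simp: a'_def)
    finally show "sgn (W n t) = cis (N t)" unfolding N_def .
  qed
  have "N (a + 2*pi) - N a = 2 * pi * d0" by (rule HN[OF Nc Nl])
  then have Ma: "M (a' + 2*pi) - M a' = 2 * pi * d0" unfolding N_def a'_def by (simp add: algebra_simps)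
  define psi where "psi t = M (t + 2*pi) - M t" for t
  have "psi 0 = psi a'"
  proof (rule cis_const[where g=psi and u=a' and v=0])
    show "continuous_on {a'..0} psi" unfolding psi_def
      by (intro continuous_intros continuous_on_compose2[OF M(1)] continuous_on_subset[OF M(1)])
         (use a'1 in auto)
    show "a' \<le> 0" by fact
    fix t assume t: "t \<in> {a'..0}"
    have nz: "sgn (W n t) \<noteq> 0" using W_nz[OF n, of t] by (simp add: sgn_zero_iff)
    have "cis (M (t + 2*pi)) = sgn (W n (t + 2*pi))" using t a'1 by (intro M(2)[symmetric]) auto
    also have "W n (t + 2*pi) = W n t" using W_periodic[of n t 1] by simp
    also have "sgn (W n t) = cis (M t)" using t a'1 by (intro M(2)) auto
    finally show "cis (psi t) = 1" unfolding psi_def by (simp add: cis_divide[symmetric])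
  qed
  then have "M (2*pi) - M 0 = 2 * pi * d0" using Ma unfolding psi_def by (simp add: add.commute)
  moreover have "continuous_on {0..2*pi} M" by (rule continuous_on_subset[OF M(1)]) (use a'1 in auto)
  moreover have "\<forall>t\<in>{0..2*pi}. sgn (W n t) = cis (M t)" using M(2) a'1 by auto
  ultimately show ?thesis by blast
qed

lemma index_val:
  assumes n: "n \<ge> 1"
    and HN: "\<And>N. continuous_on {a..a + 2*pi} N \<Longrightarrow> (\<forall>t\<in>{a..a + 2*pi}. sgn (W n t) = cis (N t))
              \<Longrightarrow> N (a + 2*pi) - N a = 2 * pi * (real_of_int d - 1)"
  shows "fp_index (F ^^ n) 0 = d"
proof (rule fp_index_eqI)
  fix r :: real assume r: "r > 0"
  obtain M where M: "continuous_on {0..2*pi} M" "\<forall>t\<in>{0..2*pi}. sgn (W n t) = cis (M t)"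
    "M (2*pi) - M 0 = 2 * pi * (real_of_int d - 1)" using index_lift[OF n HN] by blast
  show "\<exists>L. continuous_on {0..2*pi} L \<and>
     (\<forall>t\<in>{0..2*pi}. sgn (complex_of_real r * cis t - (F ^^ n) (complex_of_real r * cis t)) = cis (L t)) \<and>
     L (2*pi) - L 0 = 2 * pi * of_int d"
  proof (intro exI[of _ "\<lambda>t. t + M t"] conjI ballI)
    show "continuous_on {0..2*pi} (\<lambda>t. t + M t)" by (intro continuous_intros M(1))
    show "2 * pi + M (2 * pi) - (0 + M 0) = 2 * pi * real_of_int d" using M(3) by (simp add: algebra_simps)
    fix t assume t: "t \<in> {0..2*pi}"
    have "complex_of_real r * cis t - (F ^^ n) (complex_of_real r * cis t) =
          complex_of_real r * cis t * W n t"
      using scale[OF r, of n "cis t"] by (simp add: W_def field_simps)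
    then have "sgn (complex_of_real r * cis t - (F ^^ n) (complex_of_real r * cis t)) =
          sgn (complex_of_real r * cis t) * sgn (W n t)" by (simp add: sgn_mult)
    also have "\<dots> = cis t * cis (M t)" using sgn_polar[OF r] M(2) t by simp
    finally show "sgn (complex_of_real r * cis t - (F ^^ n) (complex_of_real r * cis t)) = cis (t + M t)"
      by (simp add: cis_mult)
  qed
qed

end

theorem mainTheorem4:
  fixes m :: nat and c :: "real \<Rightarrow> real" and a b :: real
  assumes "m \<ge> 1"
    and "continuous_on {-1..1} c"
    and "{s \<in> {-1..1}. c s = 1} = {-1, 0, 1}"
    and "strict_mono_on {-1..1} (\<lambda>s. s * c s)"
    and "0 < b - a" and "b - a < 2 * pi"
  shows "(\<forall>n\<ge>1. isolated_fixpoint (Fmap m c a b ^^ n) 0)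
    \<and> (c ` {-1..1} \<subseteq> {1/2..1} \<longrightarrow>
         (\<forall>n\<ge>1. fp_index (Fmap m c a b ^^ n) 0 = 1 - int m))
    \<and> (c ` {-1..1} \<subseteq> {1..2} \<longrightarrow>
         (\<forall>n\<ge>1. fp_index (Fmap m c a b ^^ n) 0 = 1 + int m))"
proof -
  interpret fsetup m c a b using assms by unfold_locales
  have P1: "\<forall>n\<ge>1. isolated_fixpoint (Fmap m c a b ^^ n) 0"
  proof (intro allI impI)
    fix n :: nat assume n: "n \<ge> 1"
    show "isolated_fixpoint (Fmap m c a b ^^ n) 0" unfolding isolated_fixpoint_def
    proof (intro conjI exI[of _ 1] allI impI)
      show "(Fmap m c a b ^^ n) 0 = 0" by (rule Fpow_zero)
      fix x :: complex assume "0 < dist x 0 \<and> dist x 0 < 1"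
      then have "x \<noteq> 0" by auto
      then show "(Fmap m c a b ^^ n) x \<noteq> x" using no_fix n by blast
    qed simp
  qed
  have P2: "c ` {-1..1} \<subseteq> {1/2..1} \<longrightarrow> (\<forall>n\<ge>1. fp_index (Fmap m c a b ^^ n) 0 = 1 - int m)"
  proof (intro impI allI)
    fix n :: nat assume cs: "c ` {-1..1} \<subseteq> {1/2..1}" and n: "n \<ge> 1"
    have cl: "\<forall>s\<in>{-1..1}. c s \<le> 1" using cs by auto
    show "fp_index (Fmap m c a b ^^ n) 0 = 1 - int m"
    proof (rule index_val[OF n])
      fix N assume N: "continuous_on {a..a + 2*pi} N" "\<forall>t\<in>{a..a + 2*pi}. sgn (W n t) = cis (N t)"
      have "N (a + 2*pi) - N a = real m * (- 2 * pi)"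
        using total[OF n N(1) _ sub_incr1[OF cl n N(1)]] N(2) by blast
      then show "N (a + 2*pi) - N a = 2 * pi * (real_of_int (1 - int m) - 1)" by simp
    qed
  qed
  have P3: "c ` {-1..1} \<subseteq> {1..2} \<longrightarrow> (\<forall>n\<ge>1. fp_index (Fmap m c a b ^^ n) 0 = 1 + int m)"
  proof (intro impI allI)
    fix n :: nat assume cs: "c ` {-1..1} \<subseteq> {1..2}" and n: "n \<ge> 1"
    have cl: "\<forall>s\<in>{-1..1}. c s \<ge> 1" using cs by auto
    show "fp_index (Fmap m c a b ^^ n) 0 = 1 + int m"
    proof (rule index_val[OF n])
      fix N assume N: "continuous_on {a..a + 2*pi} N" "\<forall>t\<in>{a..a + 2*pi}. sgn (W n t) = cis (N t)"
      have "N (a + 2*pi) - N a = real m * (2 * pi)"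
        using total[OF n N(1) _ sub_incr2[OF cl n N(1)]] N(2) by blast
      then show "N (a + 2*pi) - N a = 2 * pi * (real_of_int (1 + int m) - 1)" by simp
    qed
  qed
  show ?thesis using P1 P2 P3 by blast
qed



end
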